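(* The following hold. (1) For $n\ge 5$, $P_n^3$ is odd prime if and only if $n\in\{5,6,7,9,10,13\}$. (2) For $n\ge 6$, $P_n^4$ is odd prime if and only if $n\in\{6,7\}$. (3) For $n\ge 7$, $P_n^5$ is odd prime if and only if $n=7$. (4) For every $k\ge 6$ and every $n\ge k+2$, $P_n^k$ is not odd prime. (5) For every $k\ge 3$ and every $n\ge k+2$, $C_n^k$ is not odd prime.
   Context: All graphs are finite and simple. A graph $G$ of order $N$ is odd prime if there is a bijection $\ell:V(G)\to\{1,3,\ldots,2N-1\}$ with $\gcd(\ell(u),\ell(v))=1$ for every edge $uv$. For a graph $G$ and $k\ge 1$, the power $G^k$ has vertex set $V(G)$, with $u\ne v$ adjacent iff their distance in $G$ is at most $k$. $P_n$ is the path and $C_n$ the cycle on $n$ vertices. For paths only $n\ge k+2$ is considered, since otherwise $P_n^k$ is complete. *)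

theory Defs
  imports Main
begin

text \<open>A finite simple graph is given by a finite vertex set V and a symmetric,
irreflexive adjacency predicate E (only its restriction to V matters).\<close>

definition odd_prime_graph :: "'a set \<Rightarrow> ('a \<Rightarrow> 'a \<Rightarrow> bool) \<Rightarrow> bool" where
  "odd_prime_graph V E \<longleftrightarrow>
     (\<exists>lab::'a \<Rightarrow> nat. bij_betw lab V {m. odd m \<and> m < 2 * card V} \<and>
        (\<forall>u\<in>V. \<forall>v\<in>V. E u v \<longrightarrow> coprime (lab u) (lab v)))"

text \<open>Path P_n on vertices 0..n-1 (i adjacent to i+1); the distance of u,v in P_n
is |u - v|, so in the k-th power u \<noteq> v are adjacent iff |u - v| \<le> k.\<close>
definition path_power_adj :: "nat \<Rightarrow> nat \<Rightarrow> nat \<Rightarrow> bool" where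
  "path_power_adj k u v \<longleftrightarrow> u \<noteq> v \<and> (if u \<le> v then v - u else u - v) \<le> k"

text \<open>Cycle C_n on vertices 0..n-1 (i adjacent to i+1 mod n); distance of u,v is
min(|u-v|, n-|u-v|).\<close>
definition cycle_power_adj :: "nat \<Rightarrow> nat \<Rightarrow> nat \<Rightarrow> nat \<Rightarrow> bool" where
  "cycle_power_adj n k u v \<longleftrightarrow> u \<noteq> v \<and>
     (let d = (if u \<le> v then v - u else u - v) in min d (n - d) \<le> k)"

definition path_power_odd_prime :: "nat \<Rightarrow> nat \<Rightarrow> bool" where
  "path_power_odd_prime n k \<longleftrightarrow> odd_prime_graph {0..<n} (path_power_adj k)"

definition cycle_power_odd_prime :: "nat \<Rightarrow> nat \<Rightarrow> bool" where
  "cycle_power_odd_prime n k \<longleftrightarrow> odd_prime_graph {0..<n} (cycle_power_adj n k)"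

end

theory Submission imports Defs begin

lemma construct:
  assumes "length p = n" "distinct p" "set p = {0..<n}"
    "list_all (\<lambda>u. list_all (\<lambda>v. E u v \<longrightarrow> coprime (2*p!u+1) (2*p!v+1)) [0..<n]) [0..<n]"
  shows "odd_prime_graph {0..<n} E"
proof -
  have b1: "bij_betw ((!) p) {0..<n} {0..<n}"
    by (rule bij_betw_nth) (simp_all add: assms(1,2,3) atLeast0LessThan)
  have b2: "bij_betw (\<lambda>j. 2*j+1) {0..<n} {m. odd m \<and> m < 2 * n}"
  proof (rule bij_betw_byWitness[where f'="\<lambda>m. m div 2"])
    show "\<forall>a\<in>{0..<n}. (2 * a + 1) div 2 = a" by simp
    show "\<forall>a'\<in>{m. odd m \<and> m < 2 * n}. 2 * (a' div 2) + 1 = a'"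
      by (simp add: odd_two_times_div_two_succ)
    show "(\<lambda>j. 2 * j + 1) ` {0..<n} \<subseteq> {m. odd m \<and> m < 2 * n}" by auto
    show "(\<lambda>m. m div 2) ` {m. odd m \<and> m < 2 * n} \<subseteq> {0..<n}" by auto
  qed
  have "bij_betw (\<lambda>i. 2*p!i+1) {0..<n} {m. odd m \<and> m < 2 * card {0..<n}}"
    using bij_betw_trans[OF b1 b2] by (simp add: comp_def)
  moreover have "\<forall>u\<in>{0..<n}. \<forall>v\<in>{0..<n}. E u v \<longrightarrow> coprime (2*p!u+1) (2*p!v+1)"
    using assms(4) by (simp add: list_all_iff)
  ultimately show ?thesis unfolding odd_prime_graph_def
    by (intro exI[of _ "\<lambda>i. 2*p!i+1"] conjI)
qed

lemma pp_5_3: "path_power_odd_prime 5 3"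
  unfolding path_power_odd_prime_def
  by (rule construct[where p="[1, 0, 2, 3, 4]"]) code_simp+

lemma pp_6_3: "path_power_odd_prime 6 3"
  unfolding path_power_odd_prime_def
  by (rule construct[where p="[0, 1, 2, 3, 5, 4]"]) code_simp+

lemma pp_7_3: "path_power_odd_prime 7 3"
  unfolding path_power_odd_prime_def
  by (rule construct[where p="[0, 1, 2, 3, 5, 4, 6]"]) code_simp+

lemma pp_9_3: "path_power_odd_prime 9 3"
  unfolding path_power_odd_prime_def
  by (rule construct[where p="[1, 0, 2, 3, 4, 5, 6, 8, 7]"]) code_simp+

lemma pp_10_3: "path_power_odd_prime 10 3"
  unfolding path_power_odd_prime_def
  by (rule construct[where p="[0, 1, 2, 3, 5, 4, 6, 8, 9, 7]"]) code_simp+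

lemma pp_13_3: "path_power_odd_prime 13 3"
  unfolding path_power_odd_prime_def
  by (rule construct[where p="[1, 0, 2, 3, 4, 5, 6, 12, 10, 8, 9, 11, 7]"]) code_simp+

lemma pp_6_4: "path_power_odd_prime 6 4"
  unfolding path_power_odd_prime_def
  by (rule construct[where p="[1, 0, 2, 3, 5, 4]"]) code_simp+

lemma pp_7_4: "path_power_odd_prime 7 4"
  unfolding path_power_odd_prime_def
  by (rule construct[where p="[0, 1, 2, 3, 5, 6, 4]"]) code_simp+

lemma pp_7_5: "path_power_odd_prime 7 5"
  unfolding path_power_odd_prime_def
  by (rule construct[where p="[1, 0, 2, 3, 5, 6, 4]"]) code_simp+

lemma div_lt_aux:
  fixes x y d :: nat assumes "d > 0" "x + d \<le> y" shows "x div d < y div d"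
proof -
  have "(x + d) div d = x div d + 1" using assms(1) by (simp add: div_add_self2)
  moreover have "(x + d) div d \<le> y div d" using assms(2) by (rule div_le_mono)
  ultimately show ?thesis by simp
qed

lemma spread:
  fixes S :: "nat set"
  assumes "S \<subseteq> {a..b}" "\<forall>i\<in>S. \<forall>j\<in>S. i < j \<longrightarrow> j - i > k"
  shows "(card S - 1) * (k+1) \<le> b - a"
proof -
  have inj: "inj_on (\<lambda>i. (i - a) div (k+1)) S"
  proof (rule inj_onI, rule ccontr)
    fix i j assume ij: "i \<in> S" "j \<in> S" "(i - a) div (k+1) = (j - a) div (k+1)" "i \<noteq> j"
    have ai: "a \<le> i" "a \<le> j" using ij(1,2) assms(1) by auto
    show False
    proof (cases "i < j")
      case True
      then have "j - i > k" using assms(2) ij(1,2) by blast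
      then have "(i - a) + (k+1) \<le> j - a" using ai True by linarith
      then have "(i - a) div (k+1) < (j - a) div (k+1)" by (intro div_lt_aux) auto
      then show False using ij by simp
    next
      case False
      then have "j < i" using ij by simp
      then have "i - j > k" using assms(2) ij(1,2) by blast
      then have "(j - a) + (k+1) \<le> i - a" using ai \<open>j < i\<close> by linarith
      then have "(j - a) div (k+1) < (i - a) div (k+1)" by (intro div_lt_aux) auto
      then show False using ij by simp
    qed
  qed
  have img: "(\<lambda>i. (i - a) div (k+1)) ` S \<subseteq> {0..(b - a) div (k+1)}"
  proof
    fix y assume "y \<in> (\<lambda>i. (i - a) div (k+1)) ` S"
    then obtain i where iS: "i \<in> S" and y: "y = (i - a) div (k+1)" by blast
    have "i \<le> b" using subsetD[OF assms(1) iS] by simp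
    then have "i - a \<le> b - a" by (rule diff_le_mono)
    then have "(i - a) div (k+1) \<le> (b - a) div (k+1)" by (rule div_le_mono)
    then show "y \<in> {0..(b - a) div (k+1)}" using y by simp
  qed
  have "card S \<le> card {0..(b - a) div (k+1)}"
    by (rule card_inj_on_le[OF inj img]) simp
  then have "card S - 1 \<le> (b - a) div (k+1)" by simp
  then have "(card S - 1) * (k+1) \<le> ((b - a) div (k+1)) * (k+1)" by (rule mult_le_mono1)
  also have "\<dots> \<le> b - a" by (rule div_times_less_eq_dividend)
  finally show ?thesis .
qed

lemma threes:
  assumes "odd_prime_graph {0..<n} E"
  obtains S where "S \<subseteq> {0..<n}" "card S \<ge> (n+1) div 3"
    "\<forall>i\<in>S. \<forall>j\<in>S. \<not> E i j"
proof -
  obtain lab where bij: "bij_betw lab {0..<n} {m. odd m \<and> m < 2 * n}"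
    and cop: "\<forall>u\<in>{0..<n}. \<forall>v\<in>{0..<n}. E u v \<longrightarrow> coprime (lab u) (lab v)"
    using assms unfolding odd_prime_graph_def by auto
  define S where "S = {i\<in>{0..<n}. 3 dvd lab i}"
  have inj0: "inj_on lab {0..<n}" using bij by (simp add: bij_betw_def)
  have inj: "inj_on lab S" by (rule inj_on_subset[OF inj0]) (auto simp: S_def)
  have "(\<lambda>j. 6*j+3) ` {..<(n+1) div 3} \<subseteq> lab ` S"
  proof
    fix m assume "m \<in> (\<lambda>j. 6*j+3) ` {..<(n+1) div 3}"
    then obtain j where j: "j < (n+1) div 3" "m = 6*j+3" by auto
    have "3 * j + 3 \<le> n + 1" using j(1) by presburger
    then have "m < 2 * n" using j(2) by linarith
    moreover have "odd m" using j(2) by simp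
    ultimately have "m \<in> {m. odd m \<and> m < 2 * n}" by simp
    then have "m \<in> lab ` {0..<n}" using bij_betw_imp_surj_on[OF bij] by blast
    then obtain i where "i \<in> {0..<n}" "lab i = m" by blast
    moreover have "3 dvd m" using j(2) by (simp add: dvd_def) (rule exI[of _ "2*j+1"], simp)
    ultimately show "m \<in> lab ` S" unfolding S_def by auto
  qed
  then have "card ((\<lambda>j. 6*j+3) ` {..<(n+1) div 3}) \<le> card (lab ` S)"
    by (intro card_mono) (auto simp: S_def)
  moreover have "card ((\<lambda>j::nat. 6*j+3) ` {..<(n+1) div 3}) = (n+1) div 3"
    by (subst card_image) (auto simp: inj_on_def)
  moreover have "card (lab ` S) = card S" using inj by (rule card_image)
  ultimately have "card S \<ge> (n+1) div 3" by simp
  moreover have "\<forall>i\<in>S. \<forall>j\<in>S. \<not> E i j"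
  proof (intro ballI notI)
    fix i j assume "i \<in> S" "j \<in> S" "E i j"
    then have "coprime (lab i) (lab j)" using cop unfolding S_def by auto
    moreover have "3 dvd lab i" "3 dvd lab j" using \<open>i \<in> S\<close> \<open>j \<in> S\<close> unfolding S_def by auto
    ultimately show False using coprime_common_divisor[of "lab i" "lab j" 3] by simp
  qed
  moreover have "S \<subseteq> {0..<n}" unfolding S_def by blast
  ultimately show ?thesis by (intro that)
qed

lemma path_bound:
  assumes "path_power_odd_prime n k" "n \<ge> 1"
  shows "((n+1) div 3 - 1) * (k+1) \<le> n - 1"
proof -
  obtain S where S: "S \<subseteq> {0..<n}" "card S \<ge> (n+1) div 3" "\<forall>i\<in>S. \<forall>j\<in>S. \<not> path_power_adj k i j"
    by (rule threes[OF assms(1)[unfolded path_power_odd_prime_def]])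
  have "S \<subseteq> {0..n-1}" using S(1) assms(2) by auto
  moreover have "\<forall>i\<in>S. \<forall>j\<in>S. i < j \<longrightarrow> j - i > k"
  proof (intro ballI impI)
    fix i j assume ij: "i \<in> S" "j \<in> S" "i < j"
    then have "\<not> path_power_adj k i j" using S(3) by blast
    then show "j - i > k" using ij(3) unfolding path_power_adj_def by auto
  qed
  ultimately have "(card S - 1) * (k+1) \<le> n - 1 - 0" by (rule spread)
  moreover have "((n+1) div 3 - 1) * (k+1) \<le> (card S - 1) * (k+1)"
    by (rule mult_le_mono1) (use S(2) in linarith)
  ultimately show ?thesis by simp
qed

lemma cycle_bound:
  assumes "cycle_power_odd_prime n k" "n \<ge> 5"
  shows "((n+1) div 3) * (k+1) \<le> n"
proof -
  obtain S where S: "S \<subseteq> {0..<n}" "card S \<ge> (n+1) div 3" "\<forall>i\<in>S. \<forall>j\<in>S. \<not> cycle_power_adj n k i j"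
    by (rule threes[OF assms(1)[unfolded cycle_power_odd_prime_def]])
  have fin: "finite S" by (rule finite_subset[OF S(1)]) simp
  have "(n+1) div 3 \<ge> 2" using assms(2) by presburger
  then have c2: "card S \<ge> 2" using S(2) by linarith
  then have ne: "S \<noteq> {}" by auto
  define a where "a = Min S"
  define b where "b = Max S"
  have aS: "a \<in> S" and bS: "b \<in> S" using fin ne unfolding a_def b_def by auto
  have sub: "S \<subseteq> {a..b}" using fin unfolding a_def b_def by auto
  have "a \<noteq> b"
  proof
    assume "a = b" then have "S \<subseteq> {a}" using sub by auto
    then have "card S \<le> card {a}" by (intro card_mono) auto
    then have "card S \<le> 1" by simp
    then show False using c2 by simp
  qed
  moreover have "a \<le> b" using subsetD[OF sub bS] by simp
  ultimately have ab: "a < b" by simp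
  have bn: "b < n" using subsetD[OF S(1) bS] by simp
  have "\<forall>i\<in>S. \<forall>j\<in>S. i < j \<longrightarrow> j - i > k"
  proof (intro ballI impI)
    fix i j assume ij: "i \<in> S" "j \<in> S" "i < j"
    then have "\<not> cycle_power_adj n k i j" using S(3) by blast
    then have "\<not> min (j - i) (n - (j - i)) \<le> k" using ij(3) unfolding cycle_power_adj_def Let_def by simp
    then show "j - i > k" by simp
  qed
  with sub have sp: "(card S - 1) * (k+1) \<le> b - a" by (rule spread)
  have "\<not> cycle_power_adj n k a b" using S(3) aS bS by auto
  then have "\<not> min (b - a) (n - (b - a)) \<le> k" using ab unfolding cycle_power_adj_def Let_def by simp
  then have "n - (b - a) > k" by simp
  then have "(card S - 1) * (k+1) + (k+1) \<le> n" using sp ab bn by linarith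
  moreover obtain c where "card S = Suc c" using c2 by (cases "card S") auto
  ultimately have "card S * (k+1) \<le> n" by simp
  moreover have "((n+1) div 3) * (k+1) \<le> card S * (k+1)"
    by (rule mult_le_mono1) (rule S(2))
  ultimately show ?thesis by simp
qed
lemma qfacts:
  fixes n :: nat
  shows "3 * ((n+1) div 3) \<le> n + 1" "n + 1 < 3 * ((n+1) div 3) + 3"
proof -
  have e: "(n+1) div 3 * 3 + (n+1) mod 3 = n + 1" by (rule div_mult_mod_eq)
  have "(n+1) mod 3 < 3" by simp
  with e show "3 * ((n+1) div 3) \<le> n + 1" "n + 1 < 3 * ((n+1) div 3) + 3" by linarith+
qed

lemma a1: "(n::nat) \<ge> 5 \<Longrightarrow> ((n+1) div 3 - 1) * (3+1) \<le> n - 1 \<Longrightarrow> n \<in> {5,6,7,9,10,13}"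
proof -
  assume a: "(n::nat) \<ge> 5" "((n+1) div 3 - 1) * (3+1) \<le> n - 1"
  define q where "q = (n+1) div 3"
  have q1: "3*q \<le> n+1" "n+1 < 3*q+3" unfolding q_def by (rule qfacts)+
  have q2: "q \<ge> 1" using q1 a(1) by linarith
  have "(q - 1) * 4 \<le> n - 1" using a(2) unfolding q_def by simp
  then have q3: "q * 4 \<le> n + 3" using q2 a(1) by (simp add: diff_mult_distrib)
  have "q \<le> 4" using q1 q3 by linarith
  moreover have "q \<ge> 2" using q1 a(1) by linarith
  ultimately have "q = 2 \<or> q = 3 \<or> q = 4" by linarith
  then show ?thesis
  proof (elim disjE)
    assume "q = 2" then have "n \<le> 7" using q1 by linarith
    then show ?thesis using a(1) by auto
  next
    assume "q = 3" then have "n \<ge> 9" "n \<le> 10" using q1 q3 by linarith+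
    then show ?thesis by auto
  next
    assume "q = 4" then have "n = 13" using q1 q3 by linarith
    then show ?thesis by auto
  qed
qed

lemma a2: "(n::nat) \<ge> 6 \<Longrightarrow> ((n+1) div 3 - 1) * (4+1) \<le> n - 1 \<Longrightarrow> n \<in> {6,7}"
proof -
  assume a: "(n::nat) \<ge> 6" "((n+1) div 3 - 1) * (4+1) \<le> n - 1"
  define q where "q = (n+1) div 3"
  have q1: "3*q \<le> n+1" "n+1 < 3*q+3" unfolding q_def by (rule qfacts)+
  have q2: "q \<ge> 1" using q1 a(1) by linarith
  have "(q - 1) * 5 \<le> n - 1" using a(2) unfolding q_def by simp
  then have q3: "q * 5 \<le> n + 4" using q2 a(1) by (simp add: diff_mult_distrib)
  have "q < 3" using q1 q3 by linarith
  then have "n \<le> 7" using q1 by linarith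
  then show ?thesis using a(1) by auto
qed

lemma a3: "(n::nat) \<ge> 7 \<Longrightarrow> ((n+1) div 3 - 1) * (5+1) \<le> n - 1 \<Longrightarrow> n = 7"
proof -
  assume a: "(n::nat) \<ge> 7" "((n+1) div 3 - 1) * (5+1) \<le> n - 1"
  define q where "q = (n+1) div 3"
  have q1: "3*q \<le> n+1" "n+1 < 3*q+3" unfolding q_def by (rule qfacts)+
  have q2: "q \<ge> 1" using q1 a(1) by linarith
  have "(q - 1) * 6 \<le> n - 1" using a(2) unfolding q_def by simp
  then have q3: "q * 6 \<le> n + 5" using q2 a(1) by (simp add: diff_mult_distrib)
  have "q < 3" using q1 q3 by linarith
  then show "n = 7" using q1 a(1) by linarith
qed

lemma a4: "(n::nat) \<ge> 8 \<Longrightarrow> ((n+1) div 3 - 1) * 7 \<le> n - 1 \<Longrightarrow> False"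
proof -
  assume a: "(n::nat) \<ge> 8" "((n+1) div 3 - 1) * 7 \<le> n - 1"
  define q where "q = (n+1) div 3"
  have q1: "3*q \<le> n+1" "n+1 < 3*q+3" unfolding q_def by (rule qfacts)+
  have q2: "q \<ge> 1" using q1 a(1) by linarith
  have "(q - 1) * 7 \<le> n - 1" using a(2) unfolding q_def by simp
  then have q3: "q * 7 \<le> n + 6" using q2 a(1) by (simp add: diff_mult_distrib)
  show False using q1 q3 a(1) by linarith
qed

lemma a5: "(n::nat) \<ge> 5 \<Longrightarrow> ((n+1) div 3) * 4 \<le> n \<Longrightarrow> False"
proof -
  assume a: "(n::nat) \<ge> 5" "((n+1) div 3) * 4 \<le> n"
  define q where "q = (n+1) div 3"
  have q1: "3*q \<le> n+1" "n+1 < 3*q+3" unfolding q_def by (rule qfacts)+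
  have "q * 4 \<le> n" using a(2) unfolding q_def by simp
  then show False using q1 a(1) by linarith
qed

theorem theorem5p3:
  shows "(\<forall>n\<ge>5. path_power_odd_prime n 3 \<longleftrightarrow> n \<in> {5,6,7,9,10,13})
       \<and> (\<forall>n\<ge>6. path_power_odd_prime n 4 \<longleftrightarrow> n \<in> {6,7})
       \<and> (\<forall>n\<ge>7. path_power_odd_prime n 5 \<longleftrightarrow> n = 7)
       \<and> (\<forall>k\<ge>6. \<forall>n\<ge>k+2. \<not> path_power_odd_prime n k)
       \<and> (\<forall>k\<ge>3. \<forall>n\<ge>k+2. \<not> cycle_power_odd_prime n k)"
proof (intro conjI allI impI iffI)
  fix n :: nat assume n: "n \<ge> 5" "path_power_odd_prime n 3"
  have "((n+1) div 3 - 1) * (3+1) \<le> n - 1" using path_bound[OF n(2)] n(1) by simp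
  then show "n \<in> {5,6,7,9,10,13}" using n(1) a1 by blast
next
  fix n :: nat assume "n \<in> {5,6,7,9,10,13}"
  then show "path_power_odd_prime n 3" using pp_5_3 pp_6_3 pp_7_3 pp_9_3 pp_10_3 pp_13_3 by auto
next
  fix n :: nat assume n: "n \<ge> 6" "path_power_odd_prime n 4"
  have "((n+1) div 3 - 1) * (4+1) \<le> n - 1" using path_bound[OF n(2)] n(1) by simp
  then show "n \<in> {6,7}" using n(1) a2 by blast
next
  fix n :: nat assume "n \<in> {6,7}"
  then show "path_power_odd_prime n 4" using pp_6_4 pp_7_4 by auto
next
  fix n :: nat assume n: "n \<ge> 7" "path_power_odd_prime n 5"
  have "((n+1) div 3 - 1) * (5+1) \<le> n - 1" using path_bound[OF n(2)] n(1) by simp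
  then show "n = 7" using n(1) a3 by blast
next
  fix n :: nat assume "n = 7"
  then show "path_power_odd_prime n 5" using pp_7_5 by simp
next
  fix k n :: nat assume k: "k \<ge> 6" and n: "n \<ge> k + 2"
  show "\<not> path_power_odd_prime n k"
  proof
    assume "path_power_odd_prime n k"
    then have b: "((n+1) div 3 - 1) * (k+1) \<le> n - 1" by (rule path_bound) (use n in simp)
    have "((n+1) div 3 - 1) * 7 \<le> ((n+1) div 3 - 1) * (k+1)"
      by (rule mult_le_mono2) (use k in simp)
    with b have "((n+1) div 3 - 1) * 7 \<le> n - 1" by linarith
    moreover have "n \<ge> 8" using k n by simp
    ultimately show False using a4 by blast
  qed
next
  fix k n :: nat assume k: "k \<ge> 3" and n: "n \<ge> k + 2"
  show "\<not> cycle_power_odd_prime n k"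
  proof
    assume "cycle_power_odd_prime n k"
    then have b: "((n+1) div 3) * (k+1) \<le> n" by (rule cycle_bound) (use k n in simp)
    have "((n+1) div 3) * 4 \<le> ((n+1) div 3) * (k+1)"
      by (rule mult_le_mono2) (use k in simp)
    with b have "((n+1) div 3) * 4 \<le> n" by linarith
    moreover have "n \<ge> 5" using k n by simp
    ultimately show False using a5 by blast
  qed
qed

end
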